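(* Let $D=(0,1)$, $\alpha\in(3/2,2)$ and $\mu\ge\alpha$. The operator $S:H^1_0(D)\to L^2(D)$ defined by $$Sw={}_0^RD_x^{2-\alpha}w-({}_0^RD_x^{2-\alpha}w)(1)\,x^\mu$$ is compact.
   Context: For $w\in H^1_0(D)$, ${}_0^RD_x^{2-\alpha}w(x)=\frac{1}{\Gamma(\alpha-1)}\int_0^x(x-t)^{\alpha-2}w'(t)dt$ (the Riemann–Liouville derivative $\frac{d}{dx}\,{}_0I_x^{\alpha-1}w$, where $({}_0I_x^\gamma g)(x)=\frac{1}{\Gamma(\gamma)}\int_0^x(x-t)^{\gamma-1}g(t)dt$), and $({}_0^RD_x^{2-\alpha}w)(1)=\frac{1}{\Gamma(\alpha-1)}\int_0^1(1-t)^{\alpha-2}w'(t)dt$. *)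

theory Defs
  imports "HOL-Analysis.Analysis"
begin

abbreviation D :: "real set" where "D \<equiv> {0<..<1}"

definition L2D :: "(real \<Rightarrow> real) \<Rightarrow> bool" where
  "L2D f \<longleftrightarrow> set_borel_measurable lborel D f \<and> set_integrable lborel D (\<lambda>x. (f x)\<^sup>2)"

definition L2norm :: "(real \<Rightarrow> real) \<Rightarrow> real" where
  "L2norm f = sqrt (LINT x:D|lborel. (f x)\<^sup>2)"

text \<open>g is the (weak) derivative of w in L^2(D), with w(0) = 0 and w(1) = 0,
  i.e. w(x) = int_0^x g on [0,1] (absolutely continuous representative).\<close>
definition H10_deriv :: "(real \<Rightarrow> real) \<Rightarrow> (real \<Rightarrow> real) \<Rightarrow> bool" where
  "H10_deriv w g \<longleftrightarrow> L2D g \<and> (\<forall>x\<in>{0..1}. w x = (LINT t:{0<..<x}|lborel. g t)) \<and> w 1 = 0"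

definition H10 :: "(real \<Rightarrow> real) set" where
  "H10 = {w. \<exists>g. H10_deriv w g}"

definition wderiv :: "(real \<Rightarrow> real) \<Rightarrow> (real \<Rightarrow> real)" where
  "wderiv w = (SOME g. H10_deriv w g)"

definition H1norm :: "(real \<Rightarrow> real) \<Rightarrow> real" where
  "H1norm w = sqrt ((L2norm w)\<^sup>2 + (L2norm (wderiv w))\<^sup>2)"

text \<open>Riemann--Liouville derivative of order 2 - alpha of w in H^1_0:
  1/Gamma(alpha-1) * int_0^x (x-t)^(alpha-2) w'(t) dt.\<close>
definition RL :: "real \<Rightarrow> (real \<Rightarrow> real) \<Rightarrow> real \<Rightarrow> real" where
  "RL \<alpha> w x = (LINT t:{0<..<x}|lborel. (x - t) powr (\<alpha> - 2) * wderiv w t) / Gamma (\<alpha> - 1)"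

definition Sop :: "real \<Rightarrow> real \<Rightarrow> (real \<Rightarrow> real) \<Rightarrow> real \<Rightarrow> real" where
  "Sop \<alpha> \<mu> w x = RL \<alpha> w x - RL \<alpha> w 1 * x powr \<mu>"

definition compact_H10_L2 :: "((real \<Rightarrow> real) \<Rightarrow> (real \<Rightarrow> real)) \<Rightarrow> bool" where
  "compact_H10_L2 S \<longleftrightarrow> (\<forall>w\<in>H10. L2D (S w)) \<and>
     (\<forall>ws :: nat \<Rightarrow> real \<Rightarrow> real. (\<forall>n. ws n \<in> H10) \<and> (\<exists>C::real. \<forall>n. H1norm (ws n) \<le> C) \<longrightarrow>
        (\<exists>r f. strict_mono r \<and> L2D f \<and> (\<lambda>k. L2norm (\<lambda>x. S (ws (r k)) x - f x)) \<longlonglongrightarrow> 0))"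

end

theory Submission
  imports Defs "HOL-Complex_Analysis.Great_Picard"
begin


lemma powr_int_has:
  fixes a b p :: real
  assumes p: "p > -1" and ab: "a \<le> b"
  shows "((\<lambda>t. (b - t) powr p) has_integral ((b - a) powr (p+1) / (p+1))) {a<..<b}"
proof -
  have "((\<lambda>x. x powr p) has_integral ((b - a) powr (p+1) / (p+1))) (cbox 0 (b-a))"
    using has_integral_powr_from_0[OF p, of "b-a"] ab by simp
  from has_integral_affinity[OF this, of "-1" b]
  have "((\<lambda>x. (-1 *\<^sub>R x + b) powr p) has_integral ((b - a) powr (p+1) / (p+1)))
          ((\<lambda>x. (1 / -1) *\<^sub>R x + - ((1 / -1) *\<^sub>R b)) ` cbox 0 (b-a))" by simp
  moreover have "((\<lambda>x. (1 / -1) *\<^sub>R x + - ((1 / -1) *\<^sub>R b)) ` cbox 0 (b-a)) = {a..b}"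
    using image_affinity_atLeastAtMost[of "-1" b 0 "b-a"] ab by simp
  ultimately have "((\<lambda>t. (b - t) powr p) has_integral ((b - a) powr (p+1) / (p+1))) {a..b}"
    by simp
  then show ?thesis
    by (metis box_real(1) cbox_interval has_integral_open_interval)
qed

lemma powr_int:
  fixes a b p :: real
  assumes p: "p > -1" and ab: "a \<le> b"
  shows "set_integrable lborel {a<..<b} (\<lambda>t. (b - t) powr p)"
    "(LINT t:{a<..<b}|lborel. (b - t) powr p) = (b - a) powr (p+1) / (p+1)"
proof -
  have h: "((\<lambda>t. (b - t) powr p) has_integral ((b - a) powr (p+1) / (p+1))) {a<..<b}"
    by (rule powr_int_has[OF p ab])
  then have "(\<lambda>t. (b - t) powr p) absolutely_integrable_on {a<..<b}"
    by (intro nonnegative_absolutely_integrable_1) (auto simp: integrable_on_def)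
  then have "integrable lebesgue (\<lambda>t. indicator {a<..<b} t *\<^sub>R (b - t) powr p)"
    by (simp add: set_integrable_def)
  then show 1: "set_integrable lborel {a<..<b} (\<lambda>t. (b - t) powr p)"
    unfolding set_integrable_def
    by (subst (asm) integrable_completion) (auto simp: greaterThanLessThan_def[symmetric])
  show "(LINT t:{a<..<b}|lborel. (b - t) powr p) = (b - a) powr (p+1) / (p+1)"
    using set_borel_integral_eq_integral(2)[OF 1] h integral_unique by metis
qed



lemma quad_disc:
  fixes A B C :: real
  assumes "\<And>t. 0 \<le> A + 2*t*C + t^2*B" "0 \<le> B"
  shows "C^2 \<le> A * B"
proof (cases "B = 0")
  case True
  show ?thesis
  proof (rule ccontr)
    assume "\<not> ?thesis"
    then have "C \<noteq> 0" using True by simp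
    have "0 \<le> A + 2*(-(A+1)/(2*C))*C + (-(A+1)/(2*C))^2*B" by (rule assms(1))
    then show False using True \<open>C \<noteq> 0\<close> by (simp add: field_simps)
  qed
next
  case False
  then have Bp: "B > 0" using assms(2) by simp
  have "0 \<le> A + 2*(-C/B)*C + (-C/B)^2*B" by (rule assms(1))
  also have "\<dots> = (A*B - C^2)/B" using Bp by (simp add: field_simps power2_eq_square)
  finally show ?thesis using Bp by (simp add: divide_nonneg_pos zero_le_divide_iff)
qed

lemma CS_integral:
  fixes f g :: "'a \<Rightarrow> real"
  assumes fm: "f \<in> borel_measurable M" and gm: "g \<in> borel_measurable M"
    and fi: "integrable M (\<lambda>x. (f x)^2)" and gi: "integrable M (\<lambda>x. (g x)^2)"
  shows "integrable M (\<lambda>x. f x * g x)"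
    "\<bar>\<integral>x. f x * g x \<partial>M\<bar> \<le> sqrt (\<integral>x. (f x)^2 \<partial>M) * sqrt (\<integral>x. (g x)^2 \<partial>M)"
proof -
  have b: "\<bar>a * b\<bar> \<le> (a^2 + b^2)/2" for a b :: real
  proof -
    have "0 \<le> (\<bar>a\<bar> - \<bar>b\<bar>)^2" by simp
    then show ?thesis by (simp add: power2_eq_square abs_mult algebra_simps)
  qed
  show fg: "integrable M (\<lambda>x. f x * g x)"
  proof (rule Bochner_Integration.integrable_bound[where f="\<lambda>x. ((f x)^2 + (g x)^2)/2"])
    show "integrable M (\<lambda>x. ((f x)^2 + (g x)^2)/2)" using fi gi by auto
    show "(\<lambda>x. f x * g x) \<in> borel_measurable M" using fm gm by measurable
    show "AE x in M. norm (f x * g x) \<le> norm (((f x)^2 + (g x)^2)/2)"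
      using b by (auto intro!: AE_I2)
  qed
  define A where "A = (\<integral>x. (f x)^2 \<partial>M)"
  define B where "B = (\<integral>x. (g x)^2 \<partial>M)"
  define C where "C = (\<integral>x. f x * g x \<partial>M)"
  have "0 \<le> A + 2*t*C + t^2*B" for t
  proof -
    have "0 \<le> (\<integral>x. (f x + t * g x)^2 \<partial>M)" by simp
    also have "(\<integral>x. (f x + t * g x)^2 \<partial>M) = (\<integral>x. (f x)^2 + (2*t) * (f x * g x) + t^2 * (g x)^2 \<partial>M)"
      by (intro Bochner_Integration.integral_cong) (auto simp: power2_eq_square algebra_simps)
    also have "\<dots> = A + 2*t*C + t^2*B"
      unfolding A_def B_def C_def using fi gi fg by simp
    finally show ?thesis .
  qed
  moreover have "0 \<le> B" "0 \<le> A" unfolding A_def B_def by simp_all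
  ultimately have "C^2 \<le> A * B" using quad_disc by blast
  then have "sqrt (C^2) \<le> sqrt (A*B)" by (rule real_sqrt_le_mono)
  then show "\<bar>\<integral>x. f x * g x \<partial>M\<bar> \<le> sqrt (\<integral>x. (f x)^2 \<partial>M) * sqrt (\<integral>x. (g x)^2 \<partial>M)"
    unfolding A_def B_def C_def by (simp add: real_sqrt_mult)
qed



definition kr :: "real \<Rightarrow> real \<Rightarrow> real \<Rightarrow> real" where
  "kr b x t = indicator {0<..<x} t * (x - t) powr b"

lemma kr_meas[measurable]: "kr b x \<in> borel_measurable lborel"
  unfolding kr_def by measurable

lemma kr_sq: "(kr b x t)^2 = indicator {0<..<x} t * (x - t) powr (2*b)"
proof -
  have "(x - t) powr (2*b) = (x - t) powr b * (x - t) powr b"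
    unfolding mult_2 by (rule powr_add)
  then show ?thesis by (simp add: kr_def indicator_def power2_eq_square)
qed

lemma kr_sq_int:
  assumes "b > -1/2" "0 \<le> x"
  shows "integrable lborel (\<lambda>t. (kr b x t)^2)"
    "(\<integral>t. (kr b x t)^2 \<partial>lborel) = x powr (2*b+1) / (2*b+1)"
proof -
  have p: "2*b > -1" using assms by simp
  show "integrable lborel (\<lambda>t. (kr b x t)^2)"
    using powr_int(1)[OF p assms(2)] by (simp add: kr_sq set_integrable_def)
  show "(\<integral>t. (kr b x t)^2 \<partial>lborel) = x powr (2*b+1) / (2*b+1)"
    using powr_int(2)[OF p assms(2)] by (simp add: kr_sq set_lebesgue_integral_def)
qed

lemma kr_diff_int:
  assumes b: "b > -1/2" "b \<le> 0" and yx: "0 \<le> y" "y \<le> x"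
  shows "integrable lborel (\<lambda>t. (kr b x t - kr b y t)^2)"
    "(\<integral>t. (kr b x t - kr b y t)^2 \<partial>lborel) \<le> 2 * (x - y) powr (2*b+1) / (2*b+1)"
proof -
  have p: "2*b > -1" using b by simp
  have x0: "0 \<le> x" using yx by simp
  note ix = kr_sq_int[OF b(1) x0] and iy = kr_sq_int[OF b(1) yx(1)]
  have sq: "(u - v)^2 \<le> 2 * u^2 + 2 * v^2" for u v :: real
  proof -
    have "0 \<le> (u + v)^2" by simp
    then show ?thesis by (simp add: power2_eq_square algebra_simps)
  qed
  show di: "integrable lborel (\<lambda>t. (kr b x t - kr b y t)^2)"
    by (rule Bochner_Integration.integrable_bound[where f="\<lambda>t. 2 * (kr b x t)^2 + 2 * (kr b y t)^2"])
       (use ix iy in \<open>auto intro!: AE_I2 simp: sq\<close>)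
  have mid: "set_integrable lborel {y<..<x} (\<lambda>t. (x - t) powr (2*b))"
     "(LINT t:{y<..<x}|lborel. (x - t) powr (2*b)) = (x - y) powr (2*b+1) / (2*b+1)"
    using powr_int[OF p yx(2)] by auto
  define h where "h t = (kr b y t)^2 - (kr b x t)^2 + 2 * (indicator {y<..<x} t * (x - t) powr (2*b))" for t
  have hi: "integrable lborel h"
    unfolding h_def using ix iy mid(1) by (auto simp: set_integrable_def)
  have pt: "(kr b x t - kr b y t)^2 \<le> h t" if "t \<noteq> y" for t
  proof -
    consider "t \<le> 0" | "0 < t" "t < y" | "y < t" "t < x" | "x \<le> t" using \<open>t \<noteq> y\<close> by linarith
    then show ?thesis
    proof cases
      case 1 then show ?thesis by (simp add: h_def kr_def)
    next
      case 2
      have a0: "0 \<le> (x - t) powr b" by simp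
      have ab: "(x - t) powr b \<le> (y - t) powr b"
        using 2 yx b by (intro powr_mono2') auto
      have "((x - t) powr b - (y - t) powr b)^2 \<le> ((y - t) powr b)^2 - ((x - t) powr b)^2"
      proof -
        have "((y - t) powr b - (x - t) powr b) * ((y - t) powr b - (x - t) powr b)
            \<le> ((y - t) powr b - (x - t) powr b) * ((y - t) powr b + (x - t) powr b)"
          using ab a0 by (intro mult_left_mono) auto
        then show ?thesis by (simp add: power2_eq_square algebra_simps)
      qed
      then show ?thesis using 2 yx by (simp add: h_def kr_def)
    next
      case 3
      have "(kr b x t)^2 = indicator {0<..<x} t * (x - t) powr (2*b)" by (rule kr_sq)
      then show ?thesis using 3 yx by (simp add: h_def kr_def indicator_def)
    next
      case 4 then show ?thesis using yx by (simp add: h_def kr_def)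
    qed
  qed
  have "(\<integral>t. (kr b x t - kr b y t)^2 \<partial>lborel) \<le> (\<integral>t. h t \<partial>lborel)"
    by (rule integral_mono_AE[OF di hi]) (use AE_lborel_singleton[of y] pt in \<open>auto elim!: eventually_mono\<close>)
  also have "(\<integral>t. h t \<partial>lborel) = y powr (2*b+1) / (2*b+1) - x powr (2*b+1) / (2*b+1)
        + 2 * ((x - y) powr (2*b+1) / (2*b+1))"
    unfolding h_def using ix iy mid by (simp add: set_integrable_def set_lebesgue_integral_def)
  also have "\<dots> \<le> 2 * (x - y) powr (2*b+1) / (2*b+1)"
  proof -
    have "y powr (2*b+1) \<le> x powr (2*b+1)" using yx p by (intro powr_mono2) auto
    then have "y powr (2*b+1) / (2*b+1) \<le> x powr (2*b+1) / (2*b+1)" using p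
      by (intro divide_right_mono) auto
    then show ?thesis by simp
  qed
  finally show "(\<integral>t. (kr b x t - kr b y t)^2 \<partial>lborel) \<le> 2 * (x - y) powr (2*b+1) / (2*b+1)" .
qed



lemma cont_L2D:
  assumes "continuous_on {0..1} h"
  shows "L2D h"
proof -
  have "set_integrable lborel {0..1} h" using assms by (rule borel_integrable_atLeastAtMost')
  then have "set_integrable lborel D h" by (rule set_integrable_subset) auto
  then have m: "set_borel_measurable lborel D h"
    unfolding set_integrable_def set_borel_measurable_def by (rule borel_measurable_integrable)
  have "continuous_on {0..1} (\<lambda>x. (h x)^2)" using assms by (intro continuous_intros)
  then have "set_integrable lborel {0..1} (\<lambda>x. (h x)^2)" by (rule borel_integrable_atLeastAtMost')
  then have "set_integrable lborel D (\<lambda>x. (h x)^2)" by (rule set_integrable_subset) auto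
  with m show ?thesis by (simp add: L2D_def)
qed

lemma H10_wderiv:
  assumes "w \<in> H10"
  shows "H10_deriv w (wderiv w)"
  using assms unfolding H10_def wderiv_def by (auto intro: someI[of "H10_deriv w"])

definition GG :: "(real \<Rightarrow> real) \<Rightarrow> real \<Rightarrow> real" where
  "GG w t = indicator D t * wderiv w t"

definition NN :: "(real \<Rightarrow> real) \<Rightarrow> real" where
  "NN w = (\<integral>t. (GG w t)^2 \<partial>lborel)"

lemma GG_props:
  assumes "w \<in> H10"
  shows "GG w \<in> borel_measurable lborel" "integrable lborel (\<lambda>t. (GG w t)^2)"
    "L2norm (wderiv w) = sqrt (NN w)" "NN w \<ge> 0"
proof -
  have L: "L2D (wderiv w)" using H10_wderiv[OF assms] by (simp add: H10_deriv_def)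
  have eq: "(\<lambda>t. (GG w t)^2) = (\<lambda>t. indicator D t *\<^sub>R (wderiv w t)^2)"
    by (auto simp: GG_def indicator_def fun_eq_iff)
  show "GG w \<in> borel_measurable lborel"
    using L by (simp add: L2D_def set_borel_measurable_def GG_def[abs_def])
  show "integrable lborel (\<lambda>t. (GG w t)^2)"
    using L by (simp add: L2D_def set_integrable_def eq)
  show "L2norm (wderiv w) = sqrt (NN w)"
    by (simp add: L2norm_def NN_def set_lebesgue_integral_def eq)
  show "NN w \<ge> 0" by (simp add: NN_def)
qed

lemma RL_eq:
  assumes "0 \<le> x" "x \<le> 1"
  shows "RL a w x = (\<integral>t. kr (a - 2) x t * GG w t \<partial>lborel) / Gamma (a - 1)"
  unfolding RL_def set_lebesgue_integral_def
  by (rule arg_cong[where f="\<lambda>z. z / Gamma (a - 1)"], rule Bochner_Integration.integral_cong)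
     (use assms in \<open>auto simp: kr_def GG_def indicator_def\<close>)

lemma RL_bound:
  assumes a: "3/2 < a" "a < 2" and w: "w \<in> H10" and x: "0 \<le> x" "x \<le> 1"
  shows "\<bar>RL a w x\<bar> \<le> sqrt (1/(2*a-3)) * sqrt (NN w) / Gamma (a - 1)"
proof -
  have b: "a - 2 > -1/2" using a by simp
  have gp: "Gamma (a - 1) > 0" using a by (intro Gamma_real_pos) simp
  note G = GG_props[OF w]
  note K = kr_sq_int[OF b x(1)]
  have e: "2 * (a - 2) + 1 = 2*a - 3" by simp
  have k: "sqrt (\<integral>t. (kr (a - 2) x t)^2 \<partial>lborel) \<le> sqrt (1/(2*a-3))"
  proof -
    have g0: "0 < 2*a-3" using a by simp
    have "x powr (2*a-3) \<le> 1" using x g0 by (metis less_eq_real_def powr_mono2 powr_one_eq_one)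
    then have "x powr (2*a-3) / (2*a-3) \<le> 1 / (2*a-3)" using a by (intro divide_right_mono) auto
    then show ?thesis using K(2) e by simp
  qed
  have "\<bar>\<integral>t. kr (a - 2) x t * GG w t \<partial>lborel\<bar>
        \<le> sqrt (\<integral>t. (kr (a - 2) x t)^2 \<partial>lborel) * sqrt (NN w)"
    unfolding NN_def by (rule CS_integral(2)) (use G K in auto)
  also have "\<dots> \<le> sqrt (1/(2*a-3)) * sqrt (NN w)"
    by (rule mult_right_mono[OF k]) (use G(4) in simp)
  finally have "\<bar>\<integral>t. kr (a - 2) x t * GG w t \<partial>lborel\<bar> / Gamma (a - 1) \<le> sqrt (1/(2*a-3)) * sqrt (NN w) / Gamma (a - 1)"
    using gp by (intro divide_right_mono) auto
  then show ?thesis using gp by (simp add: RL_eq[OF x])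
qed

lemma RL_holder_le:
  assumes a: "3/2 < a" "a < 2" and w: "w \<in> H10" and xy: "0 \<le> y" "y \<le> x" "x \<le> 1"
  shows "\<bar>RL a w x - RL a w y\<bar> \<le> sqrt (2/(2*a-3)) * sqrt (NN w) / Gamma (a - 1) * sqrt ((x - y) powr (2*a-3))"
proof -
  have b: "a - 2 > -1/2" "a - 2 \<le> 0" using a by simp_all
  have gp: "Gamma (a - 1) > 0" using a by (intro Gamma_real_pos) simp
  note G = GG_props[OF w]
  have x0: "0 \<le> x" using xy by simp
  note Kx = kr_sq_int[OF b(1) x0] and Ky = kr_sq_int[OF b(1) xy(1)]
  note Kd = kr_diff_int[OF b xy(1,2)]
  have e: "2 * (a - 2) + 1 = 2*a - 3" by simp
  have ix: "integrable lborel (\<lambda>t. kr (a - 2) x t * GG w t)"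
    by (rule CS_integral(1)) (use G Kx in auto)
  have iy: "integrable lborel (\<lambda>t. kr (a - 2) y t * GG w t)"
    by (rule CS_integral(1)) (use G Ky in auto)
  have "RL a w x - RL a w y = (\<integral>t. (kr (a - 2) x t - kr (a - 2) y t) * GG w t \<partial>lborel) / Gamma (a - 1)"
    using ix iy xy by (simp add: RL_eq diff_divide_distrib left_diff_distrib)
  define I where "I = (\<integral>t. (kr (a - 2) x t - kr (a - 2) y t) * GG w t \<partial>lborel)"
  define Q where "Q = sqrt (\<integral>t. (kr (a - 2) x t - kr (a - 2) y t)^2 \<partial>lborel)"
  define R where "R = sqrt (2/(2*a-3)) * sqrt ((x - y) powr (2*a-3))"
  have "\<bar>I\<bar> \<le> Q * sqrt (NN w)"
    unfolding I_def Q_def NN_def by (rule CS_integral(2)) (use G Kd in auto)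
  moreover have "Q \<le> R"
    using Kd(2) e unfolding Q_def R_def by (simp add: real_sqrt_mult[symmetric])
  ultimately have "\<bar>I\<bar> \<le> R * sqrt (NN w)"
    by (meson mult_right_mono order_trans real_sqrt_ge_zero G(4))
  then have "\<bar>I\<bar> / Gamma (a - 1) \<le> R * sqrt (NN w) / Gamma (a - 1)"
    using gp by (intro divide_right_mono) auto
  then show ?thesis using gp \<open>RL a w x - RL a w y = _\<close>
    unfolding I_def R_def by (simp add: mult_ac)
qed

lemma RL_holder:
  assumes a: "3/2 < a" "a < 2" and w: "w \<in> H10" and xy: "x \<in> {0..1}" "y \<in> {0..1}"
  shows "\<bar>RL a w x - RL a w y\<bar> \<le> sqrt (2/(2*a-3)) * sqrt (NN w) / Gamma (a - 1) * sqrt (\<bar>x - y\<bar> powr (2*a-3))"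
proof (cases "y \<le> x")
  case True
  then show ?thesis using RL_holder_le[OF a w, of y x] xy by simp
next
  case False
  then show ?thesis using RL_holder_le[OF a w, of x y] xy by (simp add: abs_minus_commute)
qed

lemma equi_from_holder:
  fixes F :: "'i \<Rightarrow> real \<Rightarrow> real"
  assumes g: "0 < g" and L: "0 \<le> L"
    and H: "\<And>n x y. x \<in> S \<Longrightarrow> y \<in> S \<Longrightarrow> \<bar>F n x - F n y\<bar> \<le> L * sqrt (\<bar>x - y\<bar> powr g)"
    and e: "0 < e"
  shows "\<exists>d>0. \<forall>n x y. x \<in> S \<longrightarrow> y \<in> S \<longrightarrow> \<bar>x - y\<bar> < d \<longrightarrow> \<bar>F n x - F n y\<bar> < e"
proof -
  define c where "c = e / (L + 1)"
  have c0: "0 < c" using e L by (simp add: c_def)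
  define d where "d = c powr (2/g)"
  have d0: "0 < d" using c0 by (simp add: d_def)
  have dg: "d powr g = c^2"
  proof -
    have "d powr g = c powr (2/g*g)" by (simp add: d_def powr_powr)
    also have "2/g*g = 2" using g by simp
    also have "c powr (2::real) = c^2" using c0 powr_realpow[of c 2] by simp
    finally show ?thesis .
  qed
  show ?thesis
  proof (intro exI[of _ d] conjI allI impI d0)
    fix n x y assume xy: "x \<in> S" "y \<in> S" "\<bar>x - y\<bar> < d"
    have "\<bar>x - y\<bar> powr g \<le> d powr g" using xy g by (intro powr_mono2) auto
    then have "sqrt (\<bar>x - y\<bar> powr g) \<le> sqrt (c^2)" unfolding dg by (rule real_sqrt_le_mono)
    then have "sqrt (\<bar>x - y\<bar> powr g) \<le> c" using c0 by simp
    then have "L * sqrt (\<bar>x - y\<bar> powr g) \<le> L * c" using L by (intro mult_left_mono)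
    also have "L * c < e"
    proof -
      have "L * c = e * (L / (L + 1))" by (simp add: c_def)
      also have "\<dots> < e * 1" using L e by (intro mult_strict_left_mono) auto
      finally show ?thesis by simp
    qed
    finally show "\<bar>F n x - F n y\<bar> < e" using H[OF xy(1,2), of n] by linarith
  qed
qed

lemma RL_cont:
  assumes a: "3/2 < a" "a < 2" and w: "w \<in> H10"
  shows "continuous_on {0..1} (RL a w)"
  unfolding continuous_on_iff
proof (intro ballI allI impI)
  fix x e :: real assume x: "x \<in> {0..1}" and e: "0 < e"
  have gp: "Gamma (a - 1) > 0" using a by (intro Gamma_real_pos) simp
  have L: "0 \<le> sqrt (2/(2*a-3)) * sqrt (NN w) / Gamma (a - 1)"
    using gp GG_props(4)[OF w] a by simp
  obtain d where d: "d > 0" "\<forall>n::unit. \<forall>x y. x \<in> {0..1} \<longrightarrow> y \<in> {0..1} \<longrightarrow> \<bar>x - y\<bar> < d \<longrightarrow> \<bar>RL a w x - RL a w y\<bar> < e"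
    using equi_from_holder[where F="\<lambda>_::unit. RL a w" and S="{0..1}", OF _ L RL_holder[OF a w] e] a by auto
  show "\<exists>d>0. \<forall>y\<in>{0..1}. dist y x < d \<longrightarrow> dist (RL a w y) (RL a w x) < e"
    using d x by (auto simp: dist_real_def)
qed

lemma Sop_cont:
  assumes a: "3/2 < a" "a < 2" "a \<le> m" and w: "w \<in> H10"
  shows "continuous_on {0..1} (Sop a m w)"
proof -
  have "continuous_on {0..1} (\<lambda>x::real. x powr m)"
    using a by (intro continuous_on_powr') (auto intro: continuous_intros)
  moreover have "Sop a m w = (\<lambda>x. RL a w x - RL a w 1 * x powr m)"
    by (auto simp: Sop_def fun_eq_iff)
  ultimately show ?thesis
    using RL_cont[OF a(1,2) w] by (auto intro!: continuous_on_diff continuous_on_mult continuous_on_const)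
qed

lemma L2norm_nonneg: "0 \<le> L2norm f"
  unfolding L2norm_def set_lebesgue_integral_def by (simp add: indicator_def)

lemma L2norm_le:
  assumes c: "0 \<le> c" and b: "\<And>x. x \<in> D \<Longrightarrow> \<bar>f x\<bar> \<le> c"
  shows "L2norm f \<le> c"
proof -
  have ic: "set_integrable lborel D (\<lambda>_. c^2)"
    by (rule set_integrable_subset[OF borel_integrable_atLeastAtMost'[of 0 1]]) auto
  have cD: "(LINT x:D|lborel. c^2) = c^2"
    by (subst set_integral_const) auto
  have "(LINT x:D|lborel. (f x)^2) \<le> c^2"
  proof (cases "set_integrable lborel D (\<lambda>x. (f x)^2)")
    case True
    have "(LINT x:D|lborel. (f x)^2) \<le> (LINT x:D|lborel. c^2)"
    proof (rule set_integral_mono[OF True ic])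
      fix x assume "x \<in> D"
      then have "\<bar>f x\<bar> \<le> c" by (rule b)
      then show "(f x)^2 \<le> c^2" by (metis abs_ge_zero power2_abs power_mono)
    qed
    then show ?thesis using cD by simp
  next
    case False
    then show ?thesis
      by (simp add: set_lebesgue_integral_def set_integrable_def not_integrable_integral_eq)
  qed
  then have "L2norm f \<le> sqrt (c^2)" unfolding L2norm_def by (rule real_sqrt_le_mono)
  then show ?thesis using c by simp
qed

lemma NN_le_H1:
  assumes "w \<in> H10"
  shows "sqrt (NN w) \<le> H1norm w"
proof -
  have "sqrt (NN w) = L2norm (wderiv w)" using GG_props(3)[OF assms] by simp
  also have "\<dots> = sqrt ((L2norm (wderiv w))^2)" using L2norm_nonneg by simp
  also have "\<dots> \<le> H1norm w" unfolding H1norm_def by (rule real_sqrt_le_mono) simp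
  finally show ?thesis .
qed

theorem lemma5p1:
  fixes \<alpha> \<mu> :: real
  assumes "3/2 < \<alpha>" and "\<alpha> < 2" and "\<mu> \<ge> \<alpha>"
  shows "compact_H10_L2 (Sop \<alpha> \<mu>)"
  unfolding compact_H10_L2_def
proof (intro conjI ballI allI impI)
  have a: "3/2 < \<alpha>" "\<alpha> < 2" "\<alpha> \<le> \<mu>" using assms by auto
  fix w assume "w \<in> H10"
  then show "L2D (Sop \<alpha> \<mu> w)" by (rule cont_L2D[OF Sop_cont[OF a]])
next
  have a: "3/2 < \<alpha>" "\<alpha> < 2" "\<alpha> \<le> \<mu>" using assms by auto
  fix ws :: "nat \<Rightarrow> real \<Rightarrow> real"
  assume "(\<forall>n. ws n \<in> H10) \<and> (\<exists>C::real. \<forall>n. H1norm (ws n) \<le> C)"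
  then obtain C where ws: "\<And>n. ws n \<in> H10" and C: "\<And>n. H1norm (ws n) \<le> C" by auto
  have sN: "sqrt (NN (ws n)) \<le> C" for n using NN_le_H1[OF ws] C order_trans by blast
  have C0: "0 \<le> C" using sN[of 0] by (meson order_trans real_sqrt_ge_zero GG_props(4)[OF ws])
  have gp: "Gamma (\<alpha> - 1) > 0" using a by (intro Gamma_real_pos) simp
  have g0: "0 < 2*\<alpha> - 3" using a by simp
  define F where "F n x = RL \<alpha> (ws n) x" for n x
  define M where "M = sqrt (1/(2*\<alpha>-3)) * C / Gamma (\<alpha> - 1)"
  define L where "L = sqrt (2/(2*\<alpha>-3)) * C / Gamma (\<alpha> - 1)"
  have L0: "0 \<le> L" using C0 gp g0 by (simp add: L_def)
  have bnd: "norm (F n x) \<le> M" if "x \<in> {0..1}" for n x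
  proof -
    have "\<bar>F n x\<bar> \<le> sqrt (1/(2*\<alpha>-3)) * sqrt (NN (ws n)) / Gamma (\<alpha> - 1)"
      unfolding F_def using RL_bound[OF a(1,2) ws] that by auto
    also have "\<dots> \<le> M" unfolding M_def using gp g0 sN[of n]
      by (intro divide_right_mono mult_left_mono) auto
    finally show ?thesis by simp
  qed
  have hol: "\<bar>F n x - F n y\<bar> \<le> L * sqrt (\<bar>x - y\<bar> powr (2*\<alpha>-3))"
    if "x \<in> {0..1}" "y \<in> {0..1}" for n x y
  proof -
    have "\<bar>F n x - F n y\<bar> \<le> sqrt (2/(2*\<alpha>-3)) * sqrt (NN (ws n)) / Gamma (\<alpha> - 1) * sqrt (\<bar>x - y\<bar> powr (2*\<alpha>-3))"
      unfolding F_def by (rule RL_holder[OF a(1,2) ws that])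
    also have "\<dots> \<le> L * sqrt (\<bar>x - y\<bar> powr (2*\<alpha>-3))" unfolding L_def using gp g0 sN[of n]
      by (intro divide_right_mono mult_left_mono mult_right_mono) auto
    finally show ?thesis .
  qed
  have eqc: "\<exists>d>0. \<forall>n y. y \<in> {0..1} \<and> norm (x - y) < d \<longrightarrow> norm (F n x - F n y) < e"
    if "x \<in> {0..1}" "0 < e" for x e :: real
  proof -
    obtain d where d: "d > 0" "\<forall>n x y. x \<in> {0..1} \<longrightarrow> y \<in> {0..1} \<longrightarrow> \<bar>x - y\<bar> < d \<longrightarrow> \<bar>F n x - F n y\<bar> < e"
      using equi_from_holder[where F=F and S="{0..1}", OF g0 L0 hol \<open>0 < e\<close>] by blast
    show ?thesis
      using d \<open>x \<in> {0..1}\<close> by (simp only: real_norm_def) blast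
  qed
  have cpt: "compact {0..1::real}" by simp
  obtain g k where gc: "continuous_on {0..1} g" and k: "strict_mono (k :: nat \<Rightarrow> nat)"
    and conv: "\<And>e. 0 < e \<Longrightarrow> \<exists>N. \<forall>n x. n \<ge> N \<and> x \<in> {0..1} \<longrightarrow> norm (F (k n) x - g x) < e"
  proof (rule Arzela_Ascoli[of "{0..1}" F M, OF cpt bnd eqc])
    fix g and k :: "nat \<Rightarrow> nat"
    assume "continuous_on {0..1} g" "strict_mono k"
      "\<And>e. 0 < e \<Longrightarrow> \<exists>N. \<forall>n x. n \<ge> N \<and> x \<in> {0..1} \<longrightarrow> norm (F (k n) x - g x) < e"
    then show thesis by (rule that)
  qed
  define f where "f x = g x - g 1 * x powr \<mu>" for x
  have fc: "continuous_on {0..1} f"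
  proof -
    have "continuous_on {0..1} (\<lambda>x::real. x powr \<mu>)"
      using a by (intro continuous_on_powr') (auto intro: continuous_intros)
    then show ?thesis unfolding f_def[abs_def]
      using gc by (auto intro!: continuous_on_diff continuous_on_mult continuous_on_const)
  qed
  show "\<exists>r f. strict_mono r \<and> L2D f \<and> (\<lambda>j. L2norm (\<lambda>x. Sop \<alpha> \<mu> (ws (r j)) x - f x)) \<longlonglongrightarrow> 0"
  proof (intro exI conjI)
    show "strict_mono k" by (rule k)
    show "L2D f" by (rule cont_L2D[OF fc])
    show "(\<lambda>j. L2norm (\<lambda>x. Sop \<alpha> \<mu> (ws (k j)) x - f x)) \<longlonglongrightarrow> 0"
      unfolding LIMSEQ_def
    proof (intro allI impI)
      fix e :: real assume e: "0 < e"
      obtain N where N: "\<And>n x. n \<ge> N \<Longrightarrow> x \<in> {0..1} \<Longrightarrow> \<bar>F (k n) x - g x\<bar> < e/3"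
      proof -
        obtain N where "\<forall>n x. n \<ge> N \<and> x \<in> {0..1} \<longrightarrow> norm (F (k n) x - g x) < e/3"
          using conv[of "e/3"] e by auto
        then show ?thesis using that by (simp only: real_norm_def) blast
      qed
      show "\<exists>no. \<forall>n\<ge>no. dist (L2norm (\<lambda>x. Sop \<alpha> \<mu> (ws (k n)) x - f x)) 0 < e"
      proof (intro exI allI impI)
        fix n assume n: "N \<le> n"
        have "L2norm (\<lambda>x. Sop \<alpha> \<mu> (ws (k n)) x - f x) \<le> 2*e/3"
        proof (rule L2norm_le)
          show "0 \<le> 2*e/3" using e by simp
          fix x :: real assume x: "x \<in> D"
          have mu0: "0 < \<mu>" using a by simp
          have p1: "x powr \<mu> \<le> 1" "0 \<le> x powr \<mu>"
            using x mu0 by (simp_all, metis less_eq_real_def powr_mono2 powr_one_eq_one)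
          have d1: "\<bar>F (k n) x - g x\<bar> < e/3" using N[OF n] x by auto
          have d2: "\<bar>F (k n) 1 - g 1\<bar> < e/3" using N[OF n] by auto
          have "Sop \<alpha> \<mu> (ws (k n)) x - f x = (F (k n) x - g x) - (F (k n) 1 - g 1) * x powr \<mu>"
            by (simp add: Sop_def F_def f_def algebra_simps)
          also have "\<bar>\<dots>\<bar> \<le> \<bar>F (k n) x - g x\<bar> + \<bar>F (k n) 1 - g 1\<bar> * x powr \<mu>"
          proof -
            have "\<bar>(F (k n) 1 - g 1) * x powr \<mu>\<bar> = \<bar>F (k n) 1 - g 1\<bar> * x powr \<mu>"
              using p1 by (simp add: abs_mult)
            then show ?thesis
              using abs_triangle_ineq4[of "F (k n) x - g x" "(F (k n) 1 - g 1) * x powr \<mu>"] by linarith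
          qed
          also have "\<dots> \<le> e/3 + e/3 * 1"
            using d1 d2 p1 e by (intro add_mono mult_mono) auto
          finally show "\<bar>Sop \<alpha> \<mu> (ws (k n)) x - f x\<bar> \<le> 2*e/3" by simp
        qed
        then show "dist (L2norm (\<lambda>x. Sop \<alpha> \<mu> (ws (k n)) x - f x)) 0 < e"
          using L2norm_nonneg e by (simp add: dist_real_def)
      qed
    qed
  qed
qed

end
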